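(* Let $X_1,\dots,X_N$ be random variables (jointly distributed arbitrarily) with values in $\{1,\dots,Z\}$, with marginals $p_i(z)=\Pr(X_i=z)$ and pooled distribution $P_z=\frac1N\sum_{i=1}^N p_i(z)$. Then $$\mathrm{PI}\le S(P)-\frac{1}{N^2}\sum_{i=1}^N\sum_{j=1}^N I(X_i:X_j),$$ where $I(X_i:X_j)$ is the mutual information (in bits) between $X_i$ and $X_j$, and $S(P)=-\sum_z P_z\log_2P_z$.
   Context: The positional information is $$\mathrm{PI}=\frac1N\sum_{i=1}^N\sum_{z=1}^Z p_i(z)\log_2\frac{p_i(z)}{P_z},$$ with the convention $0\log 0=0$. Shannon entropies and mutual informations are taken in base $2$. *)

theory Defs
  imports "HOL-Probability.Probability"
begin

definition marg :: "'a measure \<Rightarrow> (nat \<Rightarrow> 'a \<Rightarrow> nat) \<Rightarrow> nat \<Rightarrow> nat \<Rightarrow> real" where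
  "marg M X i z = measure M {\<omega> \<in> space M. X i \<omega> = z}"

definition pooled :: "'a measure \<Rightarrow> (nat \<Rightarrow> 'a \<Rightarrow> nat) \<Rightarrow> nat \<Rightarrow> nat \<Rightarrow> real" where
  "pooled M X N z = (1 / real N) * (\<Sum>i=1..N. marg M X i z)"

definition PI :: "'a measure \<Rightarrow> (nat \<Rightarrow> 'a \<Rightarrow> nat) \<Rightarrow> nat \<Rightarrow> nat \<Rightarrow> real" where
  "PI M X N Z = (1 / real N) * (\<Sum>i=1..N. \<Sum>z=1..Z.
      (if marg M X i z = 0 then 0
       else marg M X i z * log 2 (marg M X i z / pooled M X N z)))"

definition pooled_entropy :: "'a measure \<Rightarrow> (nat \<Rightarrow> 'a \<Rightarrow> nat) \<Rightarrow> nat \<Rightarrow> nat \<Rightarrow> real" where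
  "pooled_entropy M X N Z = - (\<Sum>z=1..Z.
      (if pooled M X N z = 0 then 0 else pooled M X N z * log 2 (pooled M X N z)))"

definition MI :: "'a measure \<Rightarrow> (nat \<Rightarrow> 'a \<Rightarrow> nat) \<Rightarrow> nat \<Rightarrow> nat \<Rightarrow> real" where
  "MI M X i j = prob_space.mutual_information M 2
      (count_space (X i ` space M)) (count_space (X j ` space M)) (X i) (X j)"

end

theory Submission
  imports Defs
begin

lemma marg_nonneg: "0 \<le> marg M X i z"
  by (simp add: marg_def)

lemma term_eq:
  fixes p P :: real
  assumes "0 \<le> p" "p \<le> c * P" "c > 0"
  shows "(if p = 0 then 0 else p * log 2 (p / P)) = p * log 2 p - p * log 2 P"
proof (cases "p = 0")
  case False
  then have "p > 0" using assms by simp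
  moreover have "P > 0" using assms \<open>p > 0\<close>
    by (smt (verit) mult_le_0_iff)
  ultimately show ?thesis using False by (simp add: log_divide algebra_simps)
qed simp

lemma entropy_eq:
  fixes M :: "'a measure" and Y :: "'a \<Rightarrow> nat"
  assumes "information_space M 2"
    and meas: "Y \<in> measurable M (count_space UNIV)"
    and rng: "\<And>\<omega>. \<omega> \<in> space M \<Longrightarrow> Y \<omega> \<in> {1..Z}"
  shows "simple_function M Y"
    and "prob_space.entropy M 2 (count_space (Y ` space M)) Y
          = - (\<Sum>z=1..Z. measure M {\<omega> \<in> space M. Y \<omega> = z} * log 2 (measure M {\<omega> \<in> space M. Y \<omega> = z}))"
proof -
  interpret information_space M 2 by fact
  have fin: "finite (Y ` space M)"
    using rng by (meson finite_atLeastAtMost finite_subset image_subsetI)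
  show sf: "simple_function M Y"
    unfolding simple_function_def using fin meas
    by (auto intro: measurable_sets[OF meas])
  have sd: "simple_distributed M Y (\<lambda>x. measure M (Y -` {x} \<inter> space M))"
    using sf by (rule simple_distributedI) (auto simp: measure_nonneg)
  have "prob_space.entropy M 2 (count_space (Y ` space M)) Y
        = - (\<Sum>x\<in>Y`space M. measure M (Y -` {x} \<inter> space M) * log 2 (measure M (Y -` {x} \<inter> space M)))"
    using entropy_simple_distributed[OF sd] by simp
  also have "(\<Sum>x\<in>Y`space M. measure M (Y -` {x} \<inter> space M) * log 2 (measure M (Y -` {x} \<inter> space M)))
     = (\<Sum>x\<in>{1..Z}. measure M (Y -` {x} \<inter> space M) * log 2 (measure M (Y -` {x} \<inter> space M)))"
  proof (rule sum.mono_neutral_left)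
    show "Y ` space M \<subseteq> {1..Z}" using rng by auto
    show "\<forall>i\<in>{1..Z} - Y ` space M. measure M (Y -` {i} \<inter> space M) * log 2 (measure M (Y -` {i} \<inter> space M)) = 0"
    proof
      fix i assume "i \<in> {1..Z} - Y ` space M"
      then have "Y -` {i} \<inter> space M = {}" by auto
      then show "measure M (Y -` {i} \<inter> space M) * log 2 (measure M (Y -` {i} \<inter> space M)) = 0" by simp
    qed
  qed simp
  finally have fe: "prob_space.entropy M 2 (count_space (Y ` space M)) Y = - (\<Sum>x\<in>{1..Z}. measure M (Y -` {x} \<inter> space M) * log 2 (measure M (Y -` {x} \<inter> space M)))" .
  have "\<And>x. Y -` {x} \<inter> space M = {\<omega> \<in> space M. Y \<omega> = x}" by auto
  with fe show "prob_space.entropy M 2 (count_space (Y ` space M)) Y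
          = - (\<Sum>z=1..Z. measure M {\<omega> \<in> space M. Y \<omega> = z} * log 2 (measure M {\<omega> \<in> space M. Y \<omega> = z}))"
    by simp
qed

theorem mainTheorem4:
  fixes M :: "'a measure" and X :: "nat \<Rightarrow> 'a \<Rightarrow> nat" and N Z :: nat
  assumes "prob_space M"
    and "N \<ge> 1"
    and "\<And>i. i \<in> {1..N} \<Longrightarrow> X i \<in> measurable M (count_space UNIV)"
    and "\<And>i \<omega>. i \<in> {1..N} \<Longrightarrow> \<omega> \<in> space M \<Longrightarrow> X i \<omega> \<in> {1..Z}"
  shows "PI M X N Z \<le> pooled_entropy M X N Z
           - (1 / (real N)^2) * (\<Sum>i=1..N. \<Sum>j=1..N. MI M X i j)"
proof -
  have IS: "information_space M 2"
    using assms(1) by (simp add: information_space_def information_space_axioms_def)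
  interpret information_space M 2 by fact
  define H where "H i = - (\<Sum>z=1..Z. marg M X i z * log 2 (marg M X i z))" for i
  have sf: "simple_function M (X i)" and Hi: "prob_space.entropy M 2 (count_space (X i ` space M)) (X i) = H i"
    if "i \<in> {1..N}" for i
    using entropy_eq[OF IS assms(3)[OF that] assms(4)[OF that]] by (auto simp: H_def marg_def)
  have MIle: "MI M X i j \<le> H i" if "i \<in> {1..N}" "j \<in> {1..N}" for i j
  proof -
    have "MI M X i j = prob_space.entropy M 2 (count_space (X i ` space M)) (X i) - prob_space.conditional_entropy M 2 (count_space (X i ` space M)) (count_space (X j ` space M)) (X i) (X j)"
      unfolding MI_def using mutual_information_eq_entropy_conditional_entropy[OF sf[OF that(1)] sf[OF that(2)]] by simp
    moreover have "0 \<le> prob_space.conditional_entropy M 2 (count_space (X i ` space M)) (count_space (X j ` space M)) (X i) (X j)"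
      using conditional_entropy_nonneg[OF sf[OF that(1)] sf[OF that(2)]] by simp
    ultimately show ?thesis using Hi[OF that(1)] by simp
  qed
  have Npos: "real N > 0" using assms(2) by simp
  define P where "P z = pooled M X N z" for z
  have P_sum: "(\<Sum>i=1..N. marg M X i z) = real N * P z" for z
    using Npos by (simp add: P_def pooled_def)
  have pleP: "marg M X i z \<le> real N * P z" if "i \<in> {1..N}" for i z
  proof -
    have "marg M X i z \<le> (\<Sum>i=1..N. marg M X i z)"
      using that by (intro member_le_sum) (auto simp: marg_nonneg)
    then show ?thesis using P_sum by simp
  qed
  have swp: "(\<Sum>i=1..N. \<Sum>z=1..Z. marg M X i z * log 2 (P z)) = (\<Sum>z=1..Z. \<Sum>i=1..N. marg M X i z * log 2 (P z))"
    by (rule sum.swap)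
  have "PI M X N Z = (1 / real N) * (\<Sum>i=1..N. \<Sum>z=1..Z. marg M X i z * log 2 (marg M X i z) - marg M X i z * log 2 (P z))"
    unfolding PI_def P_def[symmetric]
    by (intro arg_cong[where f="\<lambda>x. (1 / real N) * x"] sum.cong refl term_eq[OF marg_nonneg pleP Npos]) auto
  also have "\<dots> = (1 / real N) * (- (\<Sum>i=1..N. H i)) - (1 / real N) * (\<Sum>z=1..Z. (\<Sum>i=1..N. marg M X i z) * log 2 (P z))"
  proof -
    have e1: "(\<Sum>i=1..N. \<Sum>z=1..Z. marg M X i z * log 2 (marg M X i z) - marg M X i z * log 2 (P z))
      = (\<Sum>i=1..N. \<Sum>z=1..Z. marg M X i z * log 2 (marg M X i z)) - (\<Sum>z=1..Z. (\<Sum>i=1..N. marg M X i z) * log 2 (P z))"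
      unfolding sum_subtractf swp sum_distrib_right ..
    have e2: "(\<Sum>i=1..N. \<Sum>z=1..Z. marg M X i z * log 2 (marg M X i z)) = - (\<Sum>i=1..N. H i)"
      unfolding H_def sum_negf by simp
    show ?thesis unfolding e1 e2 by (simp add: right_diff_distrib)
  qed
  also have "(1 / real N) * (\<Sum>z=1..Z. (\<Sum>i=1..N. marg M X i z) * log 2 (P z)) = (\<Sum>z=1..Z. P z * log 2 (P z))"
    unfolding P_sum using Npos by (simp add: sum_distrib_left)
  also have "(\<Sum>z=1..Z. P z * log 2 (P z)) = - pooled_entropy M X N Z"
    unfolding pooled_entropy_def P_def[symmetric] minus_minus by (intro sum.cong refl) auto
  finally have PIeq: "PI M X N Z = pooled_entropy M X N Z - (1 / real N) * (\<Sum>i=1..N. H i)" by simp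
  have "(\<Sum>i=1..N. \<Sum>j=1..N. MI M X i j) \<le> (\<Sum>i=1..N. \<Sum>j=1..N. H i)"
    by (intro sum_mono MIle) auto
  also have "\<dots> = real N * (\<Sum>i=1..N. H i)" by (simp add: sum_distrib_left)
  finally have "(1 / (real N)^2) * (\<Sum>i=1..N. \<Sum>j=1..N. MI M X i j) \<le> (1 / (real N)^2) * (real N * (\<Sum>i=1..N. H i))"
    using Npos by (intro mult_left_mono) auto
  also have "\<dots> = (1 / real N) * (\<Sum>i=1..N. H i)" using Npos by (simp add: power2_eq_square)
  finally show ?thesis using PIeq by simp
qed

end
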